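(* Let $P^1,\dots,P^4\in\mathbb{R}^n$ be in general position, let $Q^0$ be the equidistant point from $P^1,\dots,P^4$ with barycentric coordinate $\boldsymbol\lambda^0$, and suppose $\lambda^0_1<0$, $\lambda^0_2,\lambda^0_3,\lambda^0_4\ge0$. Let $Q^1=\pi(Q^0|L(P^2,P^3,P^4))$ with barycentric coordinate $\boldsymbol\lambda^1$ about $P^1,\dots,P^4$, and suppose $\lambda^1_2<0$, $\lambda^1_3\ge0$, $\lambda^1_4\ge0$. Let $Q^2=\pi(Q^1|L(P^3,P^4))$. Then the center of the smallest enclosing circle of $P^1,\dots,P^4$ is $Q^\ast=Q^2$ and its radius is $d^\ast=d(P^3,Q^2)$.
   Context: $d$ is the Euclidean distance. Points are in general position if $P^2-P^1,\dots,P^m-P^1$ are linearly independent. $L(S^1,\dots,S^r)$ is the affine subspace spanned by the points; $\pi(Q'|L)$ is the orthogonal projection onto the affine subspace $L$. The barycentric coordinate of $Q\in L(P^1,\dots,P^m)$ is the unique $\boldsymbol\lambda$ with $\sum_i\lambda_i=1$, $Q=\sum_i\lambda_iP^i$. The equidistant point is the unique $Q^0\in L(P^1,\dots,P^m)$ with all $d(P^i,Q^0)$ equal. The smallest enclosing circle has center $Q^\ast$ attaining $\min_Q\max_i d(P^i,Q)$ and radius $d^\ast$ equal to this minimum. *)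

theory Defs
  imports "HOL-Analysis.Analysis"
begin

text \<open>Points P 1, ..., P m are in general position: P 2 - P 1, ..., P m - P 1 linearly independent
  (stated for the indexed family, so repeated vectors are not identified).\<close>
definition general_position :: "(nat \<Rightarrow> 'a::real_vector) \<Rightarrow> nat \<Rightarrow> bool" where
  "general_position P m \<longleftrightarrow>
     (\<forall>c::nat \<Rightarrow> real. (\<Sum>i=2..m. c i *\<^sub>R (P i - P 1)) = 0 \<longrightarrow> (\<forall>i\<in>{2..m}. c i = 0))"

definition is_barycentric :: "(nat \<Rightarrow> 'a::real_vector) \<Rightarrow> nat \<Rightarrow> 'a \<Rightarrow> (nat \<Rightarrow> real) \<Rightarrow> bool" where
  "is_barycentric P m Q lam \<longleftrightarrow> (\<Sum>i=1..m. lam i) = 1 \<and> Q = (\<Sum>i=1..m. lam i *\<^sub>R P i)"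

definition is_orth_proj :: "'a::real_inner \<Rightarrow> 'a set \<Rightarrow> 'a \<Rightarrow> bool" where
  "is_orth_proj y L x \<longleftrightarrow> y \<in> L \<and> (\<forall>u\<in>L. \<forall>v\<in>L. inner (x - y) (u - v) = 0)"

definition enc_radius :: "'a::metric_space set \<Rightarrow> 'a \<Rightarrow> real" where
  "enc_radius S Q = Max ((\<lambda>p. dist p Q) ` S)"

definition sec_center :: "'a::metric_space set \<Rightarrow> 'a \<Rightarrow> bool" where
  "sec_center S Q \<longleftrightarrow> (\<forall>Q'. enc_radius S Q \<le> enc_radius S Q')"

definition sec_radius :: "'a::metric_space set \<Rightarrow> real" where
  "sec_radius S = (INF Q. enc_radius S Q)"

end

theory Submission
  imports Defs
begin

lemma sum14: "(\<Sum>i=1..4::nat. f i) = f 1 + f 2 + f 3 + (f 4::'a::comm_monoid_add)"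
  by (simp add: numeral_eq_Suc add.assoc)
lemma sum24: "(\<Sum>i=2..4::nat. f i) = f 2 + f 3 + (f 4::'a::comm_monoid_add)"
  by (simp add: numeral_eq_Suc add.assoc)

lemma mid_power:
  fixes X A B :: "'a::real_inner"
  shows "(norm (X - (1/2) *\<^sub>R (A+B)))^2 - (norm (A - (1/2) *\<^sub>R (A+B)))^2 = inner (X-A) (X-B)"
  by (simp add: power2_norm_eq_inner inner_diff_left inner_diff_right inner_add_left
      inner_add_right inner_commute algebra_simps)

lemma par_law:
  fixes Q A B :: "'a::real_inner"
  shows "(norm (Q - A))^2 + (norm (Q - B))^2 = 2 * (norm (Q - (1/2) *\<^sub>R (A+B)))^2 + 2 * (norm (A - (1/2) *\<^sub>R (A+B)))^2"
  by (simp add: power2_norm_eq_inner inner_diff_left inner_diff_right inner_add_left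
      inner_add_right inner_commute algebra_simps)

lemma pos_lemma:
  fixes C A B :: "'a::real_inner"
  assumes "norm (C - A) = norm (C - B)"
  shows "inner (C - A) (C - B) + (norm (C - A))^2 \<ge> 0"
proof -
  have e: "inner (C-A) (C-A) = inner (C-B) (C-B)" using assms by (metis power2_norm_eq_inner)
  have "inner (C - A) (C - B) + (norm (C - A))^2
      = (norm ((C - A) + (C - B)))^2 / 2"
    using e
    by (simp add: power2_norm_eq_inner inner_add_left inner_add_right inner_commute algebra_simps)
  then show ?thesis using zero_le_power2[of "norm (C - A + (C - B))"] by linarith
qed

lemma affine_comb_power:
  fixes P :: "nat \<Rightarrow> 'a::real_inner"
  assumes "finite I" "sum l I = 1" "Y = (\<Sum>i\<in>I. l i *\<^sub>R P i)"
  shows "inner (Y-A) (Y-B) - (norm (Y-C))^2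
       = (\<Sum>i\<in>I. l i * (inner (P i - A) (P i - B) - (norm (P i - C))^2))"
proof -
  define w where "w = 2 *\<^sub>R C - A - B"
  define k where "k = inner A B - inner C C"
  have h: "\<And>X. inner (X-A) (X-B) - (norm (X-C))^2 = inner X w + k"
    unfolding w_def k_def
    by (simp add: power2_norm_eq_inner inner_diff_left inner_diff_right inner_add_left
      inner_add_right inner_commute algebra_simps)
  have "(\<Sum>i\<in>I. l i * (inner (P i) w + k)) = (\<Sum>i\<in>I. l i * inner (P i) w) + (\<Sum>i\<in>I. l i) * k"
    by (simp add: distrib_left sum.distrib sum_distrib_right)
  also have "\<dots> = inner Y w + k"
    using assms by (simp add: inner_sum_left)
  finally show ?thesis by (simp add: h)
qed

theorem theorem8:
  fixes P :: "nat \<Rightarrow> 'a::euclidean_space"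
    and Q0 Q1 Q2 :: 'a and lam0 lam1 :: "nat \<Rightarrow> real"
  assumes gp: "general_position P 4"
    and Q0_aff: "Q0 \<in> affine hull (P ` {1..4})"
    and Q0_eq: "\<forall>i\<in>{1..4}. \<forall>j\<in>{1..4}. dist (P i) Q0 = dist (P j) Q0"
    and lam0: "is_barycentric P 4 Q0 lam0"
    and lam0_sgn: "lam0 1 < 0" "lam0 2 \<ge> 0" "lam0 3 \<ge> 0" "lam0 4 \<ge> 0"
    and Q1: "is_orth_proj Q1 (affine hull {P 2, P 3, P 4}) Q0"
    and lam1: "is_barycentric P 4 Q1 lam1"
    and lam1_sgn: "lam1 2 < 0" "lam1 3 \<ge> 0" "lam1 4 \<ge> 0"
    and Q2: "is_orth_proj Q2 (affine hull {P 3, P 4}) Q1"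
  shows "(\<forall>Q. sec_center (P ` {1..4}) Q \<longleftrightarrow> Q = Q2)
         \<and> sec_radius (P ` {1..4}) = dist (P 3) Q2"
proof -
  have gp': "\<And>c. (\<Sum>i=2..4. c i *\<^sub>R (P i - P 1)) = 0 \<Longrightarrow> c 2 = 0 \<and> c 3 = 0 \<and> c 4 = 0"
    using gp unfolding general_position_def by auto
  have P34: "P 3 \<noteq> P 4"
  proof
    assume e: "P 3 = P 4"
    have "(\<Sum>i=2..4. (\<lambda>i. if i = 3 then 1 else if i = 4 then -1 else 0::real) i *\<^sub>R (P i - P 1)) = 0"
      unfolding sum24 using e by simp
    from gp'[OF this] show False by simp
  qed
  define M where "M = (1/2) *\<^sub>R (P 3 + P 4)"
  define \<phi> where "\<phi> = (\<lambda>X. inner (X - P 3) (X - P 4))"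
  have phi3: "\<phi> (P 3) = 0" and phi4: "\<phi> (P 4) = 0" unfolding \<phi>_def by simp_all
  define r0 where "r0 = (norm (P 3 - Q0))^2"
  have e0: "(norm (P i - Q0))^2 = r0" if "i \<in> {1..4}" for i
  proof -
    have "(3::nat) \<in> {1..4}" by simp
    then show ?thesis using Q0_eq that unfolding r0_def dist_norm by metis
  qed
  have Q1in: "Q1 \<in> affine hull {P 2, P 3, P 4}" and Q1o: "\<And>u v. u \<in> affine hull {P 2, P 3, P 4} \<Longrightarrow> v \<in> affine hull {P 2, P 3, P 4} \<Longrightarrow> inner (Q0 - Q1) (u - v) = 0"
    using Q1 unfolding is_orth_proj_def by auto
  have pyth1: "(norm (P i - Q1))^2 = r0 - (norm (Q0 - Q1))^2" if "i \<in> {2,3,4}" for i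
  proof -
    have "P i \<in> affine hull {P 2, P 3, P 4}" using that by (auto intro: hull_inc)
    from Q1o[OF this Q1in] have o: "inner (Q0 - Q1) (P i - Q1) = 0" .
    have "P i - Q0 = (P i - Q1) - (Q0 - Q1)" by simp
    then have "(norm (P i - Q0))^2 = (norm (P i - Q1))^2 + (norm (Q0 - Q1))^2"
      using o by (simp add: power2_norm_eq_inner inner_diff_left inner_diff_right inner_commute)
    moreover have "(norm (P i - Q0))^2 = r0" using e0 that by auto
    ultimately show ?thesis by simp
  qed
  define r1 where "r1 = r0 - (norm (Q0 - Q1))^2"
  have e1: "(norm (P 2 - Q1))^2 = r1" "(norm (P 3 - Q1))^2 = r1" "(norm (P 4 - Q1))^2 = r1"
    using pyth1 unfolding r1_def by auto
  have Q2in: "Q2 \<in> affine hull {P 3, P 4}" and Q2o: "\<And>u v. u \<in> affine hull {P 3, P 4} \<Longrightarrow> v \<in> affine hull {P 3, P 4} \<Longrightarrow> inner (Q1 - Q2) (u - v) = 0"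
    using Q2 unfolding is_orth_proj_def by auto
  have pyth2: "(norm (P i - Q2))^2 = r1 - (norm (Q1 - Q2))^2" if "i \<in> {3,4}" for i
  proof -
    have "P i \<in> affine hull {P 3, P 4}" using that by (auto intro: hull_inc)
    from Q2o[OF this Q2in] have o: "inner (Q1 - Q2) (P i - Q2) = 0" .
    have "P i - Q1 = (P i - Q2) - (Q1 - Q2)" by simp
    then have "(norm (P i - Q1))^2 = (norm (P i - Q2))^2 + (norm (Q1 - Q2))^2"
      using o by (simp add: power2_norm_eq_inner inner_diff_left inner_diff_right inner_commute)
    moreover have "(norm (P i - Q1))^2 = r1" using e1 that by auto
    ultimately show ?thesis by simp
  qed
  have Q2M: "Q2 = M"
  proof -
    obtain u v where uv: "Q2 = u *\<^sub>R P 3 + v *\<^sub>R P 4" "u + v = 1"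
      using Q2in unfolding affine_hull_2 by auto
    have "(norm (P 3 - Q2))^2 = (norm (P 4 - Q2))^2" using pyth2 by auto
    moreover have "P 3 - Q2 = v *\<^sub>R (P 3 - P 4)" using uv
      by (simp add: algebra_simps) (metis add_diff_cancel_left' scaleR_left.add scaleR_one diff_add_cancel eq_diff_eq)
    moreover have "P 4 - Q2 = u *\<^sub>R (P 4 - P 3)" using uv
      by (simp add: algebra_simps) (metis add_diff_cancel_right' scaleR_left.add scaleR_one diff_add_cancel eq_diff_eq)
    ultimately have "v^2 * (norm (P 3 - P 4))^2 = u^2 * (norm (P 4 - P 3))^2"
      by (simp add: power_mult_distrib)
    moreover have "norm (P 3 - P 4) \<noteq> 0" using P34 by simp
    ultimately have "v^2 = u^2" by (simp add: norm_minus_commute)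
    then have vu: "(v - u) * (v + u) = 0" by (simp add: power2_eq_square algebra_simps)
    then have "v = u" using uv(2) by simp
    then have uh: "u = 1/2" "v = 1/2" using uv(2) by linarith+
    show ?thesis unfolding M_def uv(1) uh by (simp add: scaleR_add_right)
  qed
  have l11: "lam1 1 = 0"
  proof -
    obtain u v w where uvw: "Q1 = u *\<^sub>R P 2 + v *\<^sub>R P 3 + w *\<^sub>R P 4" "u + v + w = 1"
      using Q1in unfolding affine_hull_3 by auto
    have ls: "lam1 1 + lam1 2 + lam1 3 + lam1 4 = 1"
      and lq: "Q1 = lam1 1 *\<^sub>R P 1 + lam1 2 *\<^sub>R P 2 + lam1 3 *\<^sub>R P 3 + lam1 4 *\<^sub>R P 4"
      using lam1 unfolding is_barycentric_def sum14 by auto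
    define c where "c = (\<lambda>i::nat. if i = 2 then lam1 2 - u else if i = 3 then lam1 3 - v else lam1 4 - w)"
    have "(\<Sum>i=2..4. c i *\<^sub>R (P i - P 1)) = 0"
    proof -
      have "(\<Sum>i=2..4. c i *\<^sub>R (P i - P 1)) =
         (lam1 2 *\<^sub>R P 2 + lam1 3 *\<^sub>R P 3 + lam1 4 *\<^sub>R P 4) - (u *\<^sub>R P 2 + v *\<^sub>R P 3 + w *\<^sub>R P 4)
          - ((lam1 2 + lam1 3 + lam1 4) - (u + v + w)) *\<^sub>R P 1"
        unfolding sum24 c_def by (simp add: algebra_simps)
      also have "\<dots> = (Q1 - lam1 1 *\<^sub>R P 1) - Q1 - (- lam1 1) *\<^sub>R P 1"
      proof -
        have A: "lam1 2 *\<^sub>R P 2 + lam1 3 *\<^sub>R P 3 + lam1 4 *\<^sub>R P 4 = Q1 - lam1 1 *\<^sub>R P 1"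
          using lq by (simp add: algebra_simps)
        have C: "(lam1 2 + lam1 3 + lam1 4) - (u + v + w) = - lam1 1" using ls uvw(2) by linarith
        show ?thesis by (simp only: A C uvw(1)[symmetric])
      qed
      also have "\<dots> = 0" by simp
      finally show ?thesis .
    qed
    from gp'[OF this] have "lam1 2 = u" "lam1 3 = v" "lam1 4 = w" unfolding c_def by auto
    then show ?thesis using ls uvw(2) by linarith
  qed
  have phi2: "\<phi> (P 2) \<le> 0"
  proof -
    have "inner (Q1 - P 3) (Q1 - P 4) - (norm (Q1 - Q1))^2
      = (\<Sum>i\<in>{1..4}. lam1 i * (inner (P i - P 3) (P i - P 4) - (norm (P i - Q1))^2))"
      by (rule affine_comb_power) (use lam1 in \<open>auto simp: is_barycentric_def\<close>)
    then have "\<phi> Q1 = lam1 2 * \<phi> (P 2) - (lam1 2 + lam1 3 + lam1 4) * r1"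
      unfolding sum14 \<phi>_def using l11 e1 by (simp add: algebra_simps)
    moreover have "lam1 2 + lam1 3 + lam1 4 = 1" using lam1 l11 unfolding is_barycentric_def sum14 by simp
    moreover have "\<phi> Q1 + r1 \<ge> 0"
      using pos_lemma[of Q1 "P 3" "P 4"] e1 unfolding \<phi>_def
      by (simp add: norm_minus_commute) (metis norm_ge_zero power2_eq_imp_eq)
    ultimately have "lam1 2 * \<phi> (P 2) \<ge> 0" by simp
    then show ?thesis using lam1_sgn(1) by (simp add: mult_le_0_iff zero_le_mult_iff)
  qed
  have phi1: "\<phi> (P 1) \<le> 0"
  proof -
    have "inner (Q0 - P 3) (Q0 - P 4) - (norm (Q0 - Q0))^2
      = (\<Sum>i\<in>{1..4}. lam0 i * (inner (P i - P 3) (P i - P 4) - (norm (P i - Q0))^2))"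
      by (rule affine_comb_power) (use lam0 in \<open>auto simp: is_barycentric_def\<close>)
    then have "\<phi> Q0 = lam0 1 * \<phi> (P 1) + lam0 2 * \<phi> (P 2) - (lam0 1 + lam0 2 + lam0 3 + lam0 4) * r0"
      unfolding sum14 \<phi>_def using e0 by (simp add: algebra_simps)
    moreover have "lam0 1 + lam0 2 + lam0 3 + lam0 4 = 1" using lam0 unfolding is_barycentric_def sum14 by simp
    moreover have "\<phi> Q0 + r0 \<ge> 0"
    proof -
      have "(norm (P 3 - Q0))^2 = (norm (P 4 - Q0))^2" using e0 by auto
      then have "norm (Q0 - P 3) = norm (Q0 - P 4)"
        by (simp add: norm_minus_commute)
      from pos_lemma[OF this] show ?thesis unfolding \<phi>_def r0_def by (simp add: norm_minus_commute)
    qed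
    moreover have "lam0 2 * \<phi> (P 2) \<le> 0" using phi2 lam0_sgn(2) by (simp add: mult_nonneg_nonpos)
    ultimately have "lam0 1 * \<phi> (P 1) \<ge> 0" by simp
    then show ?thesis using lam0_sgn(1) by (simp add: mult_le_0_iff zero_le_mult_iff)
  qed
  define \<rho> where "\<rho> = dist (P 3) M"
  have rho0: "\<rho> \<ge> 0" unfolding \<rho>_def by simp
  have inball: "dist (P i) M \<le> \<rho>" if "i \<in> {1..4}" for i
  proof -
    have "\<phi> (P i) \<le> 0"
    proof -
      have "i = 1 \<or> i = 2 \<or> i = 3 \<or> i = 4" using that by auto
      then show ?thesis using phi1 phi2 phi3 phi4 by auto
    qed
    then have "(norm (P i - M))^2 \<le> (norm (P 3 - M))^2"
      using mid_power[of "P i" "P 3" "P 4"] unfolding \<phi>_def M_def by linarith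
    then show ?thesis unfolding \<rho>_def dist_norm using power2_le_imp_le by fastforce
  qed
  define S where "S = P ` {1..4::nat}"
  have finS: "finite S" unfolding S_def by simp
  have P3S: "P 3 \<in> S" and P4S: "P 4 \<in> S" unfolding S_def by auto
  have encM: "enc_radius S M = \<rho>"
    unfolding enc_radius_def
  proof (rule antisym)
    show "Max ((\<lambda>p. dist p M) ` S) \<le> \<rho>" using finS inball unfolding S_def by (auto simp: Max_le_iff)
    show "\<rho> \<le> Max ((\<lambda>p. dist p M) ` S)" unfolding \<rho>_def using finS P3S by (auto intro: Max_ge)
  qed
  have encge: "dist (P 3) Q \<le> enc_radius S Q" "dist (P 4) Q \<le> enc_radius S Q" for Q
    unfolding enc_radius_def using finS P3S P4S by (auto intro: Max_ge)
  have parQ: "(dist (P 3) Q)^2 + (dist (P 4) Q)^2 = 2 * (dist Q M)^2 + 2 * \<rho>^2" for Q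
    using par_law[of Q "P 3" "P 4"] unfolding M_def \<rho>_def dist_norm by (simp add: norm_minus_commute)
  have lower: "\<rho> \<le> enc_radius S Q" for Q
  proof (rule ccontr)
    assume "\<not> ?thesis"
    then have a: "dist (P 3) Q < \<rho>" "dist (P 4) Q < \<rho>" using encge[of Q] by linarith+
    then have "(dist (P 3) Q)^2 < \<rho>^2" "(dist (P 4) Q)^2 < \<rho>^2"
      by (simp_all add: power_strict_mono)
    with parQ[of Q] show False by (smt (verit) zero_le_power2)
  qed
  have uniq: "enc_radius S Q \<le> \<rho> \<Longrightarrow> Q = M" for Q
  proof -
    assume "enc_radius S Q \<le> \<rho>"
    then have a: "dist (P 3) Q \<le> \<rho>" "dist (P 4) Q \<le> \<rho>" using encge[of Q] by linarith+
    then have "(dist (P 3) Q)^2 \<le> \<rho>^2" "(dist (P 4) Q)^2 \<le> \<rho>^2"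
      by (simp_all add: power_mono)
    with parQ[of Q] have "(dist Q M)^2 \<le> 0" by linarith
    then show "Q = M" by simp
  qed
  have c1: "\<forall>Q. sec_center S Q \<longleftrightarrow> Q = M"
  proof
    fix Q show "sec_center S Q \<longleftrightarrow> Q = M"
    proof
      assume "sec_center S Q"
      then have "enc_radius S Q \<le> enc_radius S M" unfolding sec_center_def by blast
      then show "Q = M" using uniq encM by simp
    next
      assume "Q = M" then show "sec_center S Q" unfolding sec_center_def using encM lower by simp
    qed
  qed
  have c2: "sec_radius S = \<rho>"
    unfolding sec_radius_def
  proof (rule antisym)
    have "bdd_below (range (enc_radius S))" using lower by (auto intro!: bdd_belowI[where m=\<rho>])
    then show "(INF Q. enc_radius S Q) \<le> \<rho>" using encM by (metis cINF_lower UNIV_I)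
    show "\<rho> \<le> (INF Q. enc_radius S Q)" using lower by (auto intro: cINF_greatest)
  qed
  show ?thesis using c1 c2 Q2M unfolding S_def \<rho>_def by simp
qed

end
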